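(* Let $d$ be a positive integer and $S$ any finite set of points in $\mathbb{R}^d$ (not necessarily in general position). Then the Radon partition graph $G_T[S,2]$ is connected.
   Context: A Radon partition of a finite set $S\subset\mathbb{R}^d$ is a partition of $S$ into two nonempty disjoint parts $P_1,P_2$ (unordered) with $\operatorname{conv}(P_1)\cap\operatorname{conv}(P_2)\neq\emptyset$. For two partitions $P,P'$ of $S$, the partition distance $D(P,P')$ is the minimum number of elements of $S$ that must be removed so that $P$ and $P'$ restricted to the remaining elements coincide. The Radon partition graph $G_T[S,2]$ has as vertices all Radon partitions of $S$, with an edge between $P$ and $P'$ if and only if $D(P,P')=1$. A graph with zero or one vertex is considered connected. *)

theory Defs
  imports "HOL-Analysis.Analysis"
begin

text \<open>A (2-part) partition is represented as the unordered set {P1, P2} of its parts.\<close>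

definition radon_partitions :: "'a::euclidean_space set \<Rightarrow> 'a set set set" where
  "radon_partitions S = {P. \<exists>A B. P = {A, B} \<and> A \<noteq> {} \<and> B \<noteq> {} \<and> A \<inter> B = {} \<and>
      A \<union> B = S \<and> convex hull A \<inter> convex hull B \<noteq> {}}"

definition restrict_partition :: "'a set set \<Rightarrow> 'a set \<Rightarrow> 'a set set" where
  "restrict_partition P T = ((\<lambda>B. B \<inter> T) ` P) - {{}}"

definition partition_distance :: "'a set \<Rightarrow> 'a set set \<Rightarrow> 'a set set \<Rightarrow> nat" where
  "partition_distance S P Q =
     (LEAST k. \<exists>X. X \<subseteq> S \<and> card X = k \<and>
        restrict_partition P (S - X) = restrict_partition Q (S - X))"

definition radon_edge :: "'a::euclidean_space set \<Rightarrow> 'a set set \<Rightarrow> 'a set set \<Rightarrow> bool" where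
  "radon_edge S P Q \<longleftrightarrow> P \<in> radon_partitions S \<and> Q \<in> radon_partitions S \<and>
     partition_distance S P Q = 1"

definition radon_graph_connected :: "'a::euclidean_space set \<Rightarrow> bool" where
  "radon_graph_connected S \<longleftrightarrow>
     (\<forall>P \<in> radon_partitions S. \<forall>Q \<in> radon_partitions S. (radon_edge S)\<^sup>*\<^sup>* P Q)"

end

theory Submission
  imports Defs
begin

definition conf :: "'a set \<Rightarrow> 'a set \<Rightarrow> ('a \<Rightarrow> real) \<Rightarrow> bool" where
  "conf S A l \<longleftrightarrow> (\<forall>x\<in>S. (l x > 0 \<longrightarrow> x \<in> A) \<and> (l x < 0 \<longrightarrow> x \<notin> A))"

definition dep :: "'a::euclidean_space set \<Rightarrow> ('a \<Rightarrow> real) \<Rightarrow> bool" where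
  "dep S l \<longleftrightarrow> sum l S = 0 \<and> (\<Sum>x\<in>S. l x *\<^sub>R x) = 0"

definition nz :: "'a set \<Rightarrow> ('a \<Rightarrow> real) \<Rightarrow> bool" where
  "nz S l \<longleftrightarrow> (\<exists>x\<in>S. l x \<noteq> 0)"

lemma conf_of_radon:
  fixes S :: "'a::euclidean_space set"
  assumes fin: "finite S" and P: "P \<in> radon_partitions S"
  shows "\<exists>A l. P = {A, S - A} \<and> A \<subseteq> S \<and> dep S l \<and> nz S l \<and> conf S A l"
proof -
  obtain A B where PAB: "P = {A, B}" and ne: "A \<noteq> {}" "B \<noteq> {}" and dis: "A \<inter> B = {}"
    and un: "A \<union> B = S" and int: "convex hull A \<inter> convex hull B \<noteq> {}"
    using P unfolding radon_partitions_def by blast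
  have BA: "B = S - A" using dis un by blast
  have fA: "finite A" and fB: "finite B" using fin un by auto
  obtain p where pA: "p \<in> convex hull A" and pB: "p \<in> convex hull B" using int by blast
  obtain u where u0: "\<forall>x\<in>A. 0 \<le> u x" and u1: "sum u A = 1" and up: "(\<Sum>x\<in>A. u x *\<^sub>R x) = p"
    using pA unfolding convex_hull_finite[OF fA] by blast
  obtain v where v0: "\<forall>x\<in>B. 0 \<le> v x" and v1: "sum v B = 1" and vp: "(\<Sum>x\<in>B. v x *\<^sub>R x) = p"
    using pB unfolding convex_hull_finite[OF fB] by blast
  define l where "l x = (if x \<in> A then u x else - v x)" for x
  have SAB: "S = A \<union> B" using un by simp
  have s1: "sum l S = sum l A + sum l B"
    unfolding SAB by (rule sum.union_disjoint[OF fA fB dis])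
  have s2: "(\<Sum>x\<in>S. l x *\<^sub>R x) = (\<Sum>x\<in>A. l x *\<^sub>R x) + (\<Sum>x\<in>B. l x *\<^sub>R x)"
    unfolding SAB by (rule sum.union_disjoint[OF fA fB dis])
  have lA: "sum l A = 1" using u1 by (simp add: l_def)
  have lB: "sum l B = -1"
  proof -
    have "sum l B = (\<Sum>x\<in>B. - v x)" using dis by (intro sum.cong) (auto simp: l_def)
    also have "\<dots> = -1" using v1 by (simp add: sum_negf)
    finally show ?thesis .
  qed
  have lA2: "(\<Sum>x\<in>A. l x *\<^sub>R x) = p" using up by (simp add: l_def)
  have lB2: "(\<Sum>x\<in>B. l x *\<^sub>R x) = - p"
  proof -
    have "(\<Sum>x\<in>B. l x *\<^sub>R x) = (\<Sum>x\<in>B. - (v x *\<^sub>R x))"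
      using dis by (intro sum.cong) (auto simp: l_def)
    also have "\<dots> = - p" using vp by (simp add: sum_negf)
    finally show ?thesis .
  qed
  have dep: "dep S l" unfolding dep_def s1 s2 lA lB lA2 lB2 by simp
  have nz: "nz S l"
  proof (rule ccontr)
    assume "\<not> nz S l"
    then have "\<forall>x\<in>A. l x = 0" using un unfolding nz_def by blast
    then have "sum l A = 0" by simp
    with lA show False by simp
  qed
  have conf: "conf S A l"
    unfolding conf_def using u0 v0 dis un by (auto simp: l_def)
  show ?thesis using PAB BA dep nz conf un by blast
qed

lemma radon_of_conf:
  fixes S :: "'a::euclidean_space set"
  assumes fin: "finite S" and AS: "A \<subseteq> S" and dep: "dep S l" and nz: "nz S l" and conf: "conf S A l"
  shows "{A, S - A} \<in> radon_partitions S"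
proof -
  define pp where "pp x = max (l x) 0" for x
  define nn where "nn x = max (- l x) 0" for x
  have lpn: "l x = pp x - nn x" for x by (simp add: pp_def nn_def)
  have sl: "sum l S = 0" and sv: "(\<Sum>x\<in>S. l x *\<^sub>R x) = 0" using dep by (auto simp: dep_def)
  have eqc: "sum pp S = sum nn S"
    using sl unfolding lpn by (simp add: sum_subtractf)
  define c where "c = sum pp S"
  obtain x0 where x0: "x0 \<in> S" "l x0 \<noteq> 0" using nz by (auto simp: nz_def)
  have ppn: "pp x \<ge> 0" "nn x \<ge> 0" for x by (auto simp: pp_def nn_def)
  have c0: "c > 0"
  proof (cases "l x0 > 0")
    case True
    have "pp x0 \<le> sum pp S" using fin x0 ppn by (intro member_le_sum) auto
    then show ?thesis using True by (simp add: c_def pp_def)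
  next
    case False
    have "nn x0 \<le> sum nn S" using fin x0 ppn by (intro member_le_sum) auto
    then show ?thesis using False x0 eqc by (simp add: c_def nn_def)
  qed
  have vec: "(\<Sum>x\<in>S. pp x *\<^sub>R x) = (\<Sum>x\<in>S. nn x *\<^sub>R x)"
  proof -
    have "(\<Sum>x\<in>S. l x *\<^sub>R x) = (\<Sum>x\<in>S. pp x *\<^sub>R x) - (\<Sum>x\<in>S. nn x *\<^sub>R x)"
      unfolding lpn by (simp add: scaleR_diff_left sum_subtractf)
    then show ?thesis using sv by simp
  qed
  have fA: "finite A" "finite (S - A)" using fin AS finite_subset by auto
  have ppA: "sum pp A = sum pp S" "(\<Sum>x\<in>A. pp x *\<^sub>R x) = (\<Sum>x\<in>S. pp x *\<^sub>R x)"
    using conf AS fin by (auto simp: conf_def pp_def intro!: sum.mono_neutral_left)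
  have nnB: "sum nn (S - A) = sum nn S" "(\<Sum>x\<in>S - A. nn x *\<^sub>R x) = (\<Sum>x\<in>S. nn x *\<^sub>R x)"
    using conf AS fin by (auto simp: conf_def nn_def intro!: sum.mono_neutral_left)
  define p where "p = (1 / c) *\<^sub>R (\<Sum>x\<in>S. pp x *\<^sub>R x)"
  have pA: "p \<in> convex hull A"
    unfolding convex_hull_finite[OF fA(1)]
  proof (intro CollectI exI[of _ "\<lambda>x. pp x / c"] conjI ballI)
    show "0 \<le> pp x / c" for x using ppn c0 by simp
    show "sum (\<lambda>x. pp x / c) A = 1" using ppA c0 by (simp add: sum_divide_distrib[symmetric] c_def)
    have "(\<Sum>x\<in>A. (pp x / c) *\<^sub>R x) = (1/c) *\<^sub>R (\<Sum>x\<in>A. pp x *\<^sub>R x)"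
      by (simp add: scaleR_sum_right divide_inverse_commute)
    then show "(\<Sum>x\<in>A. (pp x / c) *\<^sub>R x) = p"
      using ppA by (simp add: p_def)
  qed
  have pB: "p \<in> convex hull (S - A)"
    unfolding convex_hull_finite[OF fA(2)]
  proof (intro CollectI exI[of _ "\<lambda>x. nn x / c"] conjI ballI)
    show "0 \<le> nn x / c" for x using ppn c0 by simp
    show "sum (\<lambda>x. nn x / c) (S - A) = 1" using nnB c0 eqc by (simp add: sum_divide_distrib[symmetric] c_def)
    have "(\<Sum>x\<in>S - A. (nn x / c) *\<^sub>R x) = (1/c) *\<^sub>R (\<Sum>x\<in>S - A. nn x *\<^sub>R x)"
      by (simp add: scaleR_sum_right divide_inverse_commute)
    then show "(\<Sum>x\<in>S - A. (nn x / c) *\<^sub>R x) = p"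
      using nnB vec by (simp add: p_def)
  qed
  have Ane: "A \<noteq> {}"
  proof
    assume "A = {}"
    then have "sum pp A = 0" by simp
    with ppA c0 show False by (simp add: c_def)
  qed
  have Bne: "S - A \<noteq> {}"
  proof
    assume "S - A = {}"
    then have "sum nn (S - A) = 0" by (metis sum.empty)
    with nnB c0 eqc show False by (simp add: c_def)
  qed
  show ?thesis unfolding radon_partitions_def
    using Ane Bne pA pB AS by blast
qed

lemma restrict_full:
  assumes "A \<subseteq> S" "A \<noteq> {}" "S - A \<noteq> {}"
  shows "restrict_partition {A, S - A} S = {A, S - A}"
  using assms unfolding restrict_partition_def by (auto simp: Int_absorb2)

lemma dist1:
  assumes fin: "finite S" and x: "x \<in> S" and ne: "P \<noteq> Q"
    and rP: "restrict_partition P S = P" and rQ: "restrict_partition Q S = Q"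
    and rx: "restrict_partition P (S - {x}) = restrict_partition Q (S - {x})"
  shows "partition_distance S P Q = 1"
  unfolding partition_distance_def
proof (rule Least_equality)
  show "\<exists>X\<subseteq>S. card X = 1 \<and> restrict_partition P (S - X) = restrict_partition Q (S - X)"
    using x rx by (intro exI[of _ "{x}"]) auto
next
  fix y assume "\<exists>X\<subseteq>S. card X = y \<and> restrict_partition P (S - X) = restrict_partition Q (S - X)"
  then obtain X where X: "X \<subseteq> S" "card X = y" "restrict_partition P (S - X) = restrict_partition Q (S - X)" by blast
  show "1 \<le> y"
  proof (rule ccontr)
    assume "\<not> 1 \<le> y"
    then have "y = 0" by simp
    then have "X = {}" using X fin finite_subset by fastforce
    then show False using X rP rQ ne by simp
  qed
qed

lemma rp_ne: "P \<in> radon_partitions S \<Longrightarrow> {} \<notin> P"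
  unfolding radon_partitions_def by auto

lemma edge:
  fixes S :: "'a::euclidean_space set"
  assumes fin: "finite S" and AS: "A \<subseteq> S" and x: "x \<in> S" "x \<notin> A"
    and R1: "{A, S - A} \<in> radon_partitions S"
    and R2: "{insert x A, S - insert x A} \<in> radon_partitions S"
  shows "radon_edge S {A, S - A} {insert x A, S - insert x A}"
    "radon_edge S {insert x A, S - insert x A} {A, S - A}"
proof -
  have ne1: "A \<noteq> {}" "S - A \<noteq> {}" using rp_ne[OF R1] by auto
  have ne2: "S - insert x A \<noteq> {}" using rp_ne[OF R2] by auto
  have r1: "restrict_partition {A, S - A} S = {A, S - A}" using restrict_full AS ne1 by blast
  have r2: "restrict_partition {insert x A, S - insert x A} S = {insert x A, S - insert x A}"
    using restrict_full[of "insert x A" S] AS x ne2 by blast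
  have neq: "{A, S - A} \<noteq> {insert x A, S - insert x A}"
  proof
    assume eq: "{A, S - A} = {insert x A, S - insert x A}"
    have "A \<noteq> insert x A" using x by blast
    then have "A = S - insert x A" using eq by (metis doubleton_eq_iff)
    then show False using ne1 by blast
  qed
  have rx: "restrict_partition {A, S - A} (S - {x}) = restrict_partition {insert x A, S - insert x A} (S - {x})"
    unfolding restrict_partition_def using x by (auto simp: insert_Diff_if)
  show "radon_edge S {A, S - A} {insert x A, S - insert x A}"
    unfolding radon_edge_def using R1 R2 dist1[OF fin x(1) neq r1 r2 rx] by blast
  show "radon_edge S {insert x A, S - insert x A} {A, S - A}"
    unfolding radon_edge_def using R1 R2 dist1[OF fin x(1) neq[symmetric] r2 r1 rx[symmetric]] by blast
qed

lemma path_lemma: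
  fixes S :: "'a::euclidean_space set"
  assumes fin: "finite S"
  shows "\<And>A l. card ((A - B) \<union> (B - A)) = n \<Longrightarrow> A \<subseteq> S \<Longrightarrow> B \<subseteq> S \<Longrightarrow> dep S l \<Longrightarrow> dep S m
    \<Longrightarrow> conf S A l \<Longrightarrow> conf S B m \<Longrightarrow> (\<forall>t\<in>{0..1}. nz S (\<lambda>x. (1-t) * l x + t * m x))
    \<Longrightarrow> (radon_edge S)\<^sup>*\<^sup>* {A, S - A} {B, S - B}"
proof (induction n rule: less_induct)
  case (less n A l)
  note cardD = less.prems(1) and AS = less.prems(2) and BS = less.prems(3) and depl = less.prems(4)
    and depm = less.prems(5) and confA = less.prems(6) and confB = less.prems(7) and seg = less.prems(8)
  define D where "D = (A - B) \<union> (B - A)"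
  show ?case
  proof (cases "D = {}")
    case True
    then have "A = B" unfolding D_def by blast
    then show ?thesis by simp
  next
    case False
    have DS: "D \<subseteq> S" using AS BS by (auto simp: D_def)
    have finD: "finite D" using DS fin finite_subset by blast
    define sg where "sg x = (if x \<in> A then 1 else -1 :: real)" for x
    define a where "a x = sg x * l x" for x
    define b where "b x = sg x * m x" for x
    define tt where "tt x = (if a x = b x then 0 else a x / (a x - b x))" for x
    have ab: "a x \<ge> 0 \<and> b x \<le> 0" if "x \<in> D" for x
    proof -
      have xS: "x \<in> S" using that DS by blast
      show ?thesis
      proof (cases "x \<in> A")
        case True
        then have "x \<notin> B" using that by (auto simp: D_def)
        then show ?thesis using True confA confB xS
          by (auto simp: a_def b_def sg_def conf_def not_less)
      next
        case False
        then have "x \<in> B" using that by (auto simp: D_def)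
        then show ?thesis using False confA confB xS
          by (auto simp: a_def b_def sg_def conf_def not_less)
      qed
    qed
    have tt01: "0 \<le> tt x \<and> tt x \<le> 1" if "x \<in> D" for x
    proof (cases "a x = b x")
      case True then show ?thesis by (simp add: tt_def)
    next
      case False
      then have pos: "a x - b x > 0" using ab[OF that] by linarith
      have "a x / (a x - b x) \<le> 1" using pos ab[OF that] by (simp add: divide_le_eq)
      moreover have "a x / (a x - b x) \<ge> 0" using pos ab[OF that] by simp
      ultimately show ?thesis using False by (simp add: tt_def)
    qed
    have fx: "(1 - t) * a x + t * b x \<ge> 0" if "x \<in> D" "0 \<le> t" "t \<le> tt x" for x t
    proof (cases "a x = b x")
      case True
      then have "a x = 0" "b x = 0" using ab[OF that(1)] by auto
      then show ?thesis by simp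
    next
      case False
      then have pos: "a x - b x > 0" using ab[OF that(1)] by linarith
      have "t * (a x - b x) \<le> a x / (a x - b x) * (a x - b x)"
        using that(3) pos False by (intro mult_right_mono) (auto simp: tt_def)
      also have "\<dots> = a x" using pos by simp
      finally show ?thesis by (simp add: algebra_simps)
    qed
    have fi: "(1 - tt x) * a x + tt x * b x = 0" if "x \<in> D" for x
    proof (cases "a x = b x")
      case True
      then have "a x = 0" "b x = 0" using ab[OF that(1)] by auto
      then show ?thesis by simp
    next
      case False
      then have pos: "a x - b x \<noteq> 0" by simp
      have "(1 - tt x) * a x + tt x * b x = a x - tt x * (a x - b x)" by (simp add: algebra_simps)
      also have "\<dots> = 0" using pos False by (simp add: tt_def)
      finally show ?thesis .
    qed
    obtain i where iD: "i \<in> D" and imin: "\<forall>x\<in>D. tt i \<le> tt x"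
    proof -
      have "Min (tt ` D) \<in> tt ` D" using finD False by (intro Min_in) auto
      then obtain i where "i \<in> D" "tt i = Min (tt ` D)" by auto
      moreover have "\<forall>x\<in>D. Min (tt ` D) \<le> tt x" using finD by auto
      ultimately show ?thesis using that by metis
    qed
    define t where "t = tt i"
    have t01: "0 \<le> t" "t \<le> 1" using tt01[OF iD] by (auto simp: t_def)
    define nu where "nu x = (1 - t) * l x + t * m x" for x
    define A' where "A' = (if i \<in> A then A - {i} else insert i A)"
    have sgnu: "sg x * nu x = (1 - t) * a x + t * b x" for x
      by (simp add: nu_def a_def b_def algebra_simps)
    have sg2: "sg x = 1 \<or> sg x = -1" for x by (simp add: sg_def)
    have depnu: "dep S nu"
    proof -
      have "sum nu S = (1 - t) * sum l S + t * sum m S"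
        by (simp add: nu_def sum.distrib sum_distrib_left)
      moreover have "(\<Sum>x\<in>S. nu x *\<^sub>R x) = (1 - t) *\<^sub>R (\<Sum>x\<in>S. l x *\<^sub>R x) + t *\<^sub>R (\<Sum>x\<in>S. m x *\<^sub>R x)"
        by (simp add: nu_def scaleR_add_left sum.distrib scaleR_sum_right)
      ultimately show ?thesis using depl depm by (simp add: dep_def)
    qed
    have nui: "nu i = 0"
    proof -
      have "sg i * nu i = 0" using fi[OF iD] sgnu by (simp add: t_def)
      then show ?thesis using sg2[of i] by auto
    qed
    have confnu: "conf S A' nu"
      unfolding conf_def
    proof (intro ballI conjI impI)
      fix x assume xS: "x \<in> S"
      have goal: "(nu x > 0 \<longrightarrow> x \<in> A') \<and> (nu x < 0 \<longrightarrow> x \<notin> A')"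
      proof (cases "x = i")
        case True then show ?thesis using nui by simp
      next
        case xi: False
        then have A'x: "x \<in> A' \<longleftrightarrow> x \<in> A" by (auto simp: A'_def)
        show ?thesis
        proof (cases "x \<in> D")
          case True
          have "sg x * nu x \<ge> 0" using fx[OF True t01(1)] imin True sgnu by (simp add: t_def)
          then show ?thesis unfolding A'x using sg2[of x]
            by (auto simp: sg_def split: if_splits)
        next
          case False
          then have AB: "x \<in> A \<longleftrightarrow> x \<in> B" by (auto simp: D_def)
          have c1: "nu x > 0 \<Longrightarrow> l x > 0 \<or> m x > 0"
          proof (rule ccontr)
            assume "nu x > 0" "\<not> (l x > 0 \<or> m x > 0)"
            then have "(1 - t) * l x \<le> 0" "t * m x \<le> 0" using t01
              by (auto simp: not_less mult_nonneg_nonpos)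
            then show False using \<open>nu x > 0\<close> by (simp add: nu_def)
          qed
          have c2: "nu x < 0 \<Longrightarrow> l x < 0 \<or> m x < 0"
          proof (rule ccontr)
            assume "nu x < 0" "\<not> (l x < 0 \<or> m x < 0)"
            then have "(1 - t) * l x \<ge> 0" "t * m x \<ge> 0" using t01
              by (auto simp: not_less)
            then show False using \<open>nu x < 0\<close> by (simp add: nu_def)
          qed
          show ?thesis unfolding A'x using c1 c2 AB confA confB xS by (auto simp: conf_def)
        qed
      qed
      show "nu x > 0 \<Longrightarrow> x \<in> A'" using goal by blast
      show "nu x < 0 \<Longrightarrow> x \<notin> A'" using goal by blast
    qed
    have seg': "\<forall>s\<in>{0..1}. nz S (\<lambda>x. (1-s) * nu x + s * m x)"
    proof
      fix s :: real assume s: "s \<in> {0..1}"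
      define r where "r = t + s * (1 - t)"
      have "s * (1 - t) \<le> 1 - t" using s t01 by (simp add: mult_left_le_one_le)
      then have r01: "r \<in> {0..1}" using s t01 by (auto simp: r_def)
      have "(1-s) * nu x + s * m x = (1 - r) * l x + r * m x" for x
        by (simp add: nu_def r_def algebra_simps)
      then show "nz S (\<lambda>x. (1-s) * nu x + s * m x)" using seg r01 by simp
    qed
    have nzl: "nz S l" using seg[rule_format, of 0] by simp
    have nznu: "nz S nu" using seg'[rule_format, of 0] by simp
    have A'S: "A' \<subseteq> S" using AS DS iD by (auto simp: A'_def)
    have D': "(A' - B) \<union> (B - A') = D - {i}" using iD by (auto simp: A'_def D_def)
    have lt: "card (D - {i}) < n" using cardD iD finD by (metis D_def card_Diff1_less)
    have IH: "(radon_edge S)\<^sup>*\<^sup>* {A', S - A'} {B, S - B}"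
      using less.IH[OF lt _ A'S BS depnu depm confnu confB seg'] D' by simp
    have R1: "{A, S - A} \<in> radon_partitions S" using radon_of_conf[OF fin AS depl nzl confA] .
    have R2: "{A', S - A'} \<in> radon_partitions S" using radon_of_conf[OF fin A'S depnu nznu confnu] .
    have iS: "i \<in> S" using iD DS by blast
    have E: "radon_edge S {A, S - A} {A', S - A'}"
    proof (cases "i \<in> A")
      case True
      then have AA: "A = insert i A'" "i \<notin> A'" by (auto simp: A'_def)
      show ?thesis using edge(2)[OF fin A'S iS AA(2) R2] R1 AA(1) by simp
    next
      case False
      then have AA: "A' = insert i A" by (auto simp: A'_def)
      show ?thesis using edge(1)[OF fin AS iS False R1] R2 AA by simp
    qed
    show ?thesis using E IH by (rule converse_rtranclp_into_rtranclp)
  qed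
qed

theorem theorem4p1:
  fixes S :: "'a::euclidean_space set"
  assumes "finite S"
  shows "radon_graph_connected S"
  unfolding radon_graph_connected_def
proof (intro ballI)
  fix P Q assume P: "P \<in> radon_partitions S" and Q: "Q \<in> radon_partitions S"
  obtain A l where PA: "P = {A, S - A}" "A \<subseteq> S" "dep S l" "nz S l" "conf S A l"
    using conf_of_radon[OF assms P] by blast
  obtain C m where QC: "Q = {C, S - C}" "C \<subseteq> S" "dep S m" "nz S m" "conf S C m"
    using conf_of_radon[OF assms Q] by blast
  show "(radon_edge S)\<^sup>*\<^sup>* P Q"
  proof (cases "\<forall>t\<in>{0..1}. nz S (\<lambda>x. (1-t) * l x + t * m x)")
    case True
    show ?thesis using path_lemma[OF assms refl PA(2) QC(2) PA(3) QC(3) PA(5) QC(5) True] PA QC by simp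
  next
    case False
    then obtain t where t: "0 \<le> t" "t \<le> 1" "\<forall>x\<in>S. (1-t) * l x + t * m x = 0"
      by (auto simp: nz_def)
    define m' where "m' x = - m x" for x
    have seg: "\<forall>s\<in>{0..1}. nz S (\<lambda>x. (1-s) * l x + s * m' x)"
    proof (rule ccontr)
      assume "\<not> ?thesis"
      then obtain s where s: "0 \<le> s" "s \<le> 1" "\<forall>x\<in>S. (1-s) * l x - s * m x = 0"
        by (auto simp: nz_def m'_def)
      obtain x0 where x0: "x0 \<in> S" "l x0 \<noteq> 0" using PA(4) by (auto simp: nz_def)
      obtain x1 where x1: "x1 \<in> S" "m x1 \<noteq> 0" using QC(4) by (auto simp: nz_def)
      have "t \<noteq> 0" using t(3) x0 by auto
      moreover have "t \<noteq> 1" using t(3) x1 by auto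
      moreover have "s \<noteq> 0" using s(3) x0 by auto
      moreover have "s \<noteq> 1" using s(3) x1 by auto
      ultimately have tt: "0 < t" "t < 1" "0 < s" "s < 1" using t s by auto
      have e1: "(1-t) * l x0 + t * m x0 = 0" and e2: "(1-s) * l x0 - s * m x0 = 0"
        using t(3) s(3) x0 by auto
      have "s * ((1-t) * l x0 + t * m x0) + t * ((1-s) * l x0 - s * m x0) = 0"
        using e1 e2 by simp
      then have "(s * (1-t) + t * (1-s)) * l x0 = 0" by (simp add: algebra_simps)
      moreover have "s * (1-t) + t * (1-s) > 0" using tt by (simp add: add_pos_pos)
      ultimately show False using x0 by simp
    qed
    have depm': "dep S m'" using QC(3) by (simp add: dep_def m'_def sum_negf)
    have confm': "conf S (S - C) m'" using QC(5) by (auto simp: conf_def m'_def)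
    have SC: "S - C \<subseteq> S" by blast
    have "(radon_edge S)\<^sup>*\<^sup>* {A, S - A} {S - C, S - (S - C)}"
      using path_lemma[OF assms refl PA(2) SC PA(3) depm' PA(5) confm' seg] .
    moreover have "{S - C, S - (S - C)} = Q" using QC(1,2) by (auto simp: double_diff)
    ultimately show ?thesis using PA(1) by simp
  qed
qed

end
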